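(* Let $\Lambda\subset(0,\infty)$ with $D_{BM}(\Lambda)=+\infty$. Then there exists an increasing function $\Psi$ on $(0,\infty)$ with $\Psi(s)\nearrow+\infty$ as $s\to\infty$ which admits a family of intervals substantial for $\Psi$.
   Context: For an interval $I$, $n_\Lambda(I)$ denotes the number of points of $\Lambda$ in $I$. For $D>0$, a family of disjoint intervals $I_k=(a_k,b_k)$ with $0<a_1<b_1<a_2<b_2<\cdots$, $a_k\nearrow+\infty$, is called substantial for $D$ if $\frac{n_\Lambda(a_k,b_k)}{b_k-a_k}>D$ for all $k$ and $\sum_k\left(\frac{b_k-a_k}{b_k}\right)^2=+\infty$. The Beurling–Malliavin density of $\Lambda\subset(0,\infty)$ is $D_{BM}(\Lambda)=\sup\{D>0:\text{there exists a family substantial for } D\}$ (and $0$ if no such $D$ exists). For an increasing function $\Psi$ on $(0,\infty)$, a family of disjoint intervals $I_k=(a_k,b_k)\subset(0,\infty)$ is called substantial for $\Psi$ if $\frac{n_\Lambda(a_k,b_k)}{b_k-a_k}>\Psi(b_k-a_k)$ for all $k$ and $\sum_k\left(\frac{b_k-a_k}{b_k}\right)^2=+\infty$. *)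

theory Defs
  imports "HOL-Analysis.Analysis"
begin

text \<open>The counting function n_Lambda(a,b) takes values in the extended naturals:
  it is infinite when Lambda has infinitely many points in (a,b).
  We express "n_Lambda(a,b)/(b-a) > t" accordingly.\<close>

definition count_density_gt :: "real set \<Rightarrow> real \<Rightarrow> real \<Rightarrow> real \<Rightarrow> bool" where
  "count_density_gt \<Lambda> a b t \<longleftrightarrow>
     infinite (\<Lambda> \<inter> {a<..<b}) \<or> real (card (\<Lambda> \<inter> {a<..<b})) / (b - a) > t"

definition substantial_const :: "real set \<Rightarrow> real \<Rightarrow> (nat \<Rightarrow> real) \<Rightarrow> (nat \<Rightarrow> real) \<Rightarrow> bool" where
  "substantial_const \<Lambda> D a b \<longleftrightarrow>
     0 < a 0 \<and> (\<forall>k. a k < b k \<and> b k < a (Suc k)) \<and>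
     filterlim a at_top sequentially \<and>
     (\<forall>k. count_density_gt \<Lambda> (a k) (b k) D) \<and>
     \<not> summable (\<lambda>k. ((b k - a k) / b k)\<^sup>2)"

definition D_BM :: "real set \<Rightarrow> ereal" where
  "D_BM \<Lambda> = Sup ({ereal D | D. D > 0 \<and> (\<exists>a b. substantial_const \<Lambda> D a b)} \<union> {0})"

definition substantial_fun :: "real set \<Rightarrow> (real \<Rightarrow> real) \<Rightarrow> (nat \<Rightarrow> real) \<Rightarrow> (nat \<Rightarrow> real) \<Rightarrow> bool" where
  "substantial_fun \<Lambda> \<Psi> a b \<longleftrightarrow>
     (\<forall>k. 0 \<le> a k \<and> a k < b k) \<and>
     (\<forall>j k. j \<noteq> k \<longrightarrow> {a j<..<b j} \<inter> {a k<..<b k} = {}) \<and>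
     (\<forall>k. count_density_gt \<Lambda> (a k) (b k) (\<Psi> (b k - a k))) \<and>
     \<not> summable (\<lambda>k. ((b k - a k) / b k)\<^sup>2)"

end

theory Submission
  imports Defs
begin

lemma cdg_mono:
  assumes "count_density_gt L x y t" "t' \<le> t"
  shows "count_density_gt L x y t'"
  using assms unfolding count_density_gt_def by auto

lemma block_exists:
  fixes a b :: "nat \<Rightarrow> real"
  assumes "substantial_const L D a b"
  shows "\<exists>p q. p < q \<and> (\<forall>k\<ge>p. r < a k) \<and> 1 \<le> (\<Sum>k\<in>{p..<q}. ((b k - a k) / b k)\<^sup>2)"
proof -
  from assms have lim: "filterlim a at_top sequentially"
    and ns: "\<not> summable (\<lambda>k. ((b k - a k) / b k)\<^sup>2)"
    unfolding substantial_const_def by auto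
  have "eventually (\<lambda>k. r < a k) sequentially"
    using lim by (simp add: filterlim_at_top_dense)
  then obtain p where hp: "\<forall>k\<ge>p. r < a k" by (auto simp: eventually_sequentially)
  define f where "f k = ((b k - a k) / b k)\<^sup>2" for k
  have "\<exists>q. 1 \<le> (\<Sum>k\<in>{p..<q}. f k)"
  proof (rule ccontr)
    assume "\<not> ?thesis"
    hence h: "\<And>q. (\<Sum>k\<in>{p..<q}. f k) < 1" by (simp add: not_le)
    have "summable f"
    proof (rule summableI_nonneg_bounded)
      show "\<And>n. 0 \<le> f n" by (simp add: f_def)
      fix n
      show "sum f {..<n} \<le> sum f {..<p} + 1"
      proof (cases "n \<le> p")
        case True
        then have "sum f {..<n} \<le> sum f {..<p}"
          by (intro sum_mono2) (auto simp: f_def)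
        moreover have "0 \<le> (1::real)" by simp
        ultimately show ?thesis by linarith
      next
        case False
        then have "{..<n} = {..<p} \<union> {p..<n}" by auto
        then have "sum f {..<n} = sum f {..<p} + sum f {p..<n}"
          by (simp add: sum.union_disjoint ivl_disj_int)
        with h[of n] show ?thesis by linarith
      qed
    qed
    with ns show False unfolding f_def by blast
  qed
  then obtain q where hq: "1 \<le> (\<Sum>k\<in>{p..<q}. f k)" by blast
  have "p < q" using hq by (cases "p < q") auto
  with hp hq show ?thesis unfolding f_def by blast
qed

theorem lemma3p2:
  fixes \<Lambda> :: "real set"
  assumes "\<Lambda> \<subseteq> {0<..}"
    and "D_BM \<Lambda> = \<infinity>"
  shows "\<exists>\<Psi> :: real \<Rightarrow> real. mono_on {0<..} \<Psi> \<and> filterlim \<Psi> at_top at_top \<and>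
           (\<exists>a b. substantial_fun \<Lambda> \<Psi> a b)"
proof -
  have ex: "\<forall>n::nat. \<exists>D a b. real n < D \<and> substantial_const \<Lambda> D a b"
  proof (rule ccontr)
    assume "\<not> ?thesis"
    then obtain n :: nat where hn: "\<And>D a b. real n < D \<Longrightarrow> \<not> substantial_const \<Lambda> D a b" by auto
    have "D_BM \<Lambda> \<le> ereal (real n)" unfolding D_BM_def
    proof (rule Sup_least)
      fix x assume "x \<in> {ereal D |D. 0 < D \<and> (\<exists>a b. substantial_const \<Lambda> D a b)} \<union> {0}"
      then show "x \<le> ereal (real n)" using hn by (force simp: not_less)
    qed
    with assms(2) show False by simp
  qed
  then obtain D A B where DAB: "\<And>n. real n < D n \<and> substantial_const \<Lambda> (D n) (A n) (B n)"
    by metis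
  have "\<forall>n r. \<exists>p q. p < q \<and> (\<forall>k\<ge>p. r < A n k) \<and> 1 \<le> (\<Sum>k\<in>{p..<q}. ((B n k - A n k) / B n k)\<^sup>2)"
    using block_exists DAB by blast
  then obtain P Q where PQ: "\<And>n r. P n r < Q n r \<and> (\<forall>k\<ge>P n r. r < A n k) \<and>
      1 \<le> (\<Sum>k\<in>{P n r..<Q n r}. ((B n k - A n k) / B n k)\<^sup>2)"
    by metis
  define R where "R = rec_nat (0::real) (\<lambda>n r. r + 1 + (\<Sum>k\<in>{P n r..<Q n r}. B n k))"
  have R0: "R 0 = 0" and RS: "\<And>n. R (Suc n) = R n + 1 + (\<Sum>k\<in>{P n (R n)..<Q n (R n)}. B n k)"
    by (simp_all add: R_def)
  define blk where "blk n = {P n (R n)..<Q n (R n)}" for n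
  have fam: "\<And>n k. A n k < B n k \<and> B n k < A n (Suc k)"
    using DAB unfolding substantial_const_def by blast
  have Rnn: "\<And>n. 0 \<le> R n"
  proof -
    fix n show "0 \<le> R n"
    proof (induction n)
      case 0 then show ?case by (simp add: R0)
    next
      case (Suc n)
      have "\<forall>k\<in>{P n (R n)..<Q n (R n)}. 0 \<le> B n k"
        using PQ[of n "R n"] fam Suc by (meson atLeastLessThan_iff less_eq_real_def order.strict_trans order_trans)
      then have "0 \<le> (\<Sum>k\<in>{P n (R n)..<Q n (R n)}. B n k)" by (metis (no_types, lifting) sum_nonneg)
      with Suc show ?case by (simp add: RS)
    qed
  qed
  have Bpos: "\<And>n k. k \<in> blk n \<Longrightarrow> R n < A n k \<and> 0 < B n k"
  proof -
    fix n k assume "k \<in> blk n"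
    then have "R n < A n k" using PQ[of n "R n"] by (auto simp: blk_def)
    with Rnn[of n] fam[of n k] show "R n < A n k \<and> 0 < B n k" by linarith
  qed
  have inblk: "\<And>n k. k \<in> blk n \<Longrightarrow> R n < A n k \<and> B n k \<le> R (Suc n)"
  proof -
    fix n k assume k: "k \<in> blk n"
    have "B n k \<le> (\<Sum>k\<in>blk n. B n k)"
      by (rule member_le_sum) (use k Bpos in \<open>auto intro: less_imp_le simp: blk_def\<close>)
    then have "B n k \<le> R (Suc n)" using Rnn[of n] by (simp add: RS blk_def)
    with Bpos[OF k] show "R n < A n k \<and> B n k \<le> R (Suc n)" by blast
  qed
  have RSuc: "\<And>n. R n + 1 \<le> R (Suc n)"
  proof -
    fix n
    have "0 \<le> (\<Sum>k\<in>blk n. B n k)"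
      by (rule sum_nonneg) (use Bpos in \<open>auto intro: less_imp_le\<close>)
    then show "R n + 1 \<le> R (Suc n)" by (simp add: RS blk_def)
  qed
  have Rmono: "\<And>n m. n \<le> m \<Longrightarrow> R n \<le> R m"
  proof -
    have "mono R" by (rule mono_iff_le_Suc[THEN iffD2]) (use RSuc in \<open>smt (verit)\<close>)
    then show "\<And>n m. n \<le> m \<Longrightarrow> R n \<le> R m" by (simp add: mono_def)
  qed
  have Rge: "\<And>n. real n \<le> R n"
  proof -
    fix n show "real n \<le> R n"
      by (induction n) (auto simp: R0 intro: order_trans[OF _ RSuc])
  qed
  have Afam: "\<And>n j k. j < k \<Longrightarrow> B n j < A n k"
  proof -
    fix n j k :: nat assume "j < k"
    have "strict_mono (A n)" unfolding strict_mono_Suc_iff using fam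
      by (meson order.strict_trans)
    then have "A n (Suc j) \<le> A n k" using \<open>j < k\<close>
      by (metis Suc_leI strict_mono_less_eq)
    with fam[of n j] show "B n j < A n k" by linarith
  qed
  define S where "S = Sigma UNIV blk"
  have blkne: "\<And>n. P n (R n) \<in> blk n" using PQ by (simp add: blk_def)
  have infS: "infinite S"
  proof
    assume "finite S"
    then have "finite (fst ` S)" by simp
    moreover have "fst ` S = UNIV"
    proof -
      have "\<And>n. n \<in> fst ` S" using blkne unfolding S_def by (metis SigmaI UNIV_I fst_conv image_eqI)
      then show ?thesis by auto
    qed
    ultimately show False by simp
  qed
  have cS: "countable S" by (rule countableI_type)
  define g where "g = from_nat_into S"
  have bij: "bij_betw g UNIV S" unfolding g_def by (rule bij_betw_from_nat_into[OF cS infS])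
  then have inj: "inj g" and rg: "range g = S" by (auto simp: bij_betw_def)
  define a where "a j = A (fst (g j)) (snd (g j))" for j
  define b where "b j = B (fst (g j)) (snd (g j))" for j
  define \<Psi> where "\<Psi> s = real (card {m. R (Suc m) < s})" for s
  have finM: "\<And>s. finite {m. R (Suc m) < s}"
  proof -
    fix s
    have "{m. R (Suc m) < s} \<subseteq> {..nat \<lceil>s\<rceil>}"
    proof
      fix m assume "m \<in> {m. R (Suc m) < s}"
      then have "real (Suc m) < s" using Rge[of "Suc m"] by simp
      then have "real_of_int (int m) \<le> of_int \<lceil>s\<rceil>" using le_of_int_ceiling[of s] by (simp only: of_int_of_nat_eq)
      then have "int m \<le> \<lceil>s\<rceil>" by (simp only: of_int_le_iff)
      then show "m \<in> {..nat \<lceil>s\<rceil>}" by simp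
    qed
    then show "finite {m. R (Suc m) < s}" by (rule finite_subset) simp
  qed
  have Psi_le: "\<And>s n. s \<le> R (Suc n) \<Longrightarrow> \<Psi> s \<le> real n"
  proof -
    fix s n assume s: "s \<le> R (Suc n)"
    have "{m. R (Suc m) < s} \<subseteq> {..<n}"
    proof
      fix m assume "m \<in> {m. R (Suc m) < s}"
      then have "R (Suc m) < R (Suc n)" using s by simp
      then show "m \<in> {..<n}" using Rmono[of "Suc n" "Suc m"] by (auto simp: not_less[symmetric])
    qed
    then have "card {m. R (Suc m) < s} \<le> n" by (metis card_lessThan card_mono finite_lessThan)
    then show "\<Psi> s \<le> real n" by (simp add: \<Psi>_def)
  qed
  have mono: "mono_on {0<..} \<Psi>"
  proof (rule mono_onI)
    fix r s :: real assume "r \<le> s"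
    then have "{m. R (Suc m) < r} \<subseteq> {m. R (Suc m) < s}" by auto
    then show "\<Psi> r \<le> \<Psi> s" unfolding \<Psi>_def using finM by (simp add: card_mono)
  qed
  have lim: "filterlim \<Psi> at_top at_top"
    unfolding filterlim_at_top eventually_at_top_linorder
  proof
    fix Z :: real
    define n where "n = nat \<lceil>Z\<rceil>"
    show "\<exists>N. \<forall>s\<ge>N. Z \<le> \<Psi> s"
    proof (intro exI allI impI)
      fix s assume s: "R (Suc n) + 1 \<le> s"
      have "{..n} \<subseteq> {m. R (Suc m) < s}"
      proof
        fix m assume "m \<in> {..n}"
        then have "R (Suc m) \<le> R (Suc n)" by (intro Rmono) simp
        with s show "m \<in> {m. R (Suc m) < s}" by simp
      qed
      then have "card {..n} \<le> card {m. R (Suc m) < s}" using finM by (rule card_mono[rotated])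
      then have "real n + 1 \<le> \<Psi> s" by (simp add: \<Psi>_def)
      then show "Z \<le> \<Psi> s" unfolding n_def by linarith
    qed
  qed
  have order: "\<And>n i m l. (n, i) \<in> S \<Longrightarrow> (m, l) \<in> S \<Longrightarrow> (n < m \<or> (n = m \<and> i < l)) \<Longrightarrow> B n i \<le> A m l"
  proof -
    fix n i m l assume ni: "(n, i) \<in> S" and ml: "(m, l) \<in> S" and o: "n < m \<or> (n = m \<and> i < l)"
    from ni have i: "i \<in> blk n" by (simp add: S_def)
    from ml have l: "l \<in> blk m" by (simp add: S_def)
    show "B n i \<le> A m l"
    proof (cases "n < m")
      case True
      have "B n i \<le> R (Suc n)" using inblk[OF i] by simp
      also have "\<dots> \<le> R m" using True by (intro Rmono) simp
      also have "\<dots> < A m l" using inblk[OF l] by simp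
      finally show ?thesis by simp
    next
      case False
      with o have "n = m" "i < l" by auto
      then show ?thesis using Afam[of i l n] by simp
    qed
  qed
  have gS: "\<And>j. g j \<in> S" using rg by auto
  have sub: "substantial_fun \<Lambda> \<Psi> a b"
    unfolding substantial_fun_def
  proof (intro conjI allI impI)
    fix k
    have "snd (g k) \<in> blk (fst (g k))" using gS[of k] by (auto simp: S_def mem_Sigma_iff)
    from inblk[OF this] Rnn[of "fst (g k)"] fam[of "fst (g k)" "snd (g k)"]
    show "0 \<le> a k" "a k < b k" by (auto simp: a_def b_def)
  next
    fix j k :: nat assume "j \<noteq> k"
    then have ne: "g j \<noteq> g k" using inj by (auto dest: injD)
    obtain n i where gj: "g j = (n, i)" by (cases "g j")
    obtain m l where gk: "g k = (m, l)" by (cases "g k")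
    have "B n i \<le> A m l \<or> B m l \<le> A n i"
    proof (cases "n < m \<or> (n = m \<and> i < l)")
      case True
      then show ?thesis using order gS gj gk by metis
    next
      case False
      then have "m < n \<or> (m = n \<and> l < i)" using ne gj gk by auto
      then show ?thesis using order gS gj gk by metis
    qed
    then show "{a j<..<b j} \<inter> {a k<..<b k} = {}"
      by (auto simp: a_def b_def gj gk)
  next
    fix k
    obtain n i where gk: "g k = (n, i)" by (cases "g k")
    have i: "i \<in> blk n" using gS[of k] gk by (auto simp: S_def)
    have "B n i - A n i \<le> R (Suc n)" using inblk[OF i] Bpos[OF i] Rnn[of n] by linarith
    then have "\<Psi> (B n i - A n i) \<le> D n" using Psi_le DAB[of n] by (meson less_imp_le order_trans)
    moreover have "count_density_gt \<Lambda> (A n i) (B n i) (D n)"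
      using DAB[of n] unfolding substantial_const_def by blast
    ultimately show "count_density_gt \<Lambda> (a k) (b k) (\<Psi> (b k - a k))"
      by (auto simp: a_def b_def gk intro: cdg_mono)
  next
    define f where "f p = ((B (fst p) (snd p) - A (fst p) (snd p)) / B (fst p) (snd p))\<^sup>2" for p
    have feq: "(\<lambda>k. ((b k - a k) / b k)\<^sup>2) = (\<lambda>j. f (g j))"
      by (simp add: f_def a_def b_def)
    show "\<not> summable (\<lambda>k. ((b k - a k) / b k)\<^sup>2)"
    proof
      assume "summable (\<lambda>k. ((b k - a k) / b k)\<^sup>2)"
      then have sm: "summable (\<lambda>j. f (g j))" by (simp add: feq)
      have bound: "real M \<le> suminf (\<lambda>j. f (g j))" for M
      proof -
        define F where "F = Sigma {..<M} blk"
        have finF: "finite F" unfolding F_def by (auto simp: blk_def)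
        have "real M = (\<Sum>n<M. (1::real))" by simp
        also have "\<dots> \<le> (\<Sum>n<M. \<Sum>i\<in>blk n. f (n, i))"
          by (intro sum_mono) (use PQ in \<open>simp add: blk_def f_def\<close>)
        also have "\<dots> = sum f F" unfolding F_def
          by (subst sum.Sigma) (auto simp: blk_def)
        also have "sum f F = sum (\<lambda>j. f (g j)) (g -` F)"
        proof -
          have "F \<subseteq> range g" using rg by (auto simp: F_def S_def)
          then have "g ` (g -` F) = F" by auto
          then have "sum f F = sum f (g ` (g -` F))" by simp
          also have "\<dots> = sum (f \<circ> g) (g -` F)"
            by (rule sum.reindex) (use inj in \<open>auto intro: inj_on_subset\<close>)
          finally show ?thesis by simp
        qed
        also have "\<dots> \<le> suminf (\<lambda>j. f (g j))"
          by (rule sum_le_suminf[OF sm finite_vimageI[OF finF inj]]) (simp add: f_def)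
        finally show ?thesis .
      qed
      obtain M :: nat where "suminf (\<lambda>j. f (g j)) < real M" using reals_Archimedean2 by blast
      with bound[of M] show False by simp
    qed
  qed
  show ?thesis using mono lim sub by blast
qed

end
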